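(* Let $\{\phi_i=U_i\phi\}_{i=1}^n$ be a geometrically uniform frame for $\mathbb{C}^m$ with generating group $\mathcal{Q}=\{U_1,\dots,U_n\}$, let $Q=\mathbb{Z}_{n_1}\times\cdots\times\mathbb{Z}_{n_p}$ be an additive group with a group isomorphism $\mathcal{Q}\to Q$, $U_i\mapsto q$, and write $\phi(q)=U_i\phi$ for the corresponding frame vector (so $\phi(0)=\phi$). Let $S=\sum_i\phi_i\phi_i^*$. Define $s(q)=\langle\phi(0),\phi(q)\rangle$, its Fourier transform $\hat s(h)=\frac1{\sqrt n}\sum_{q\in Q}\langle h,q\rangle s(q)$, the vector Fourier transform $\hat\phi(h)=\frac1{\sqrt n}\sum_{q\in Q}\langle h,q\rangle\phi(q)$, $\sigma(h)=n^{1/4}\sqrt{\hat s(h)}$ (where $\hat s(h)\ge0$), $\mathcal{I}=\{h\in Q:\sigma(h)\ne0\}$, and $u(h)=\hat\phi(h)/\sigma(h)$ for $h\in\mathcal{I}$. Then: (1) the numbers $\sigma(h)$, $h\in Q$, are the singular values of the $m\times n$ matrix $\Phi$ with columns $\phi_i$ (the nonzero ones being indexed by $\mathcal{I}$); (2) the dual frame vectors $\bar\phi_i=S^{-1}\phi_i$ are geometrically uniform with generating group $\mathcal{Q}$: $\bar\phi_i=U_i\bar\phi$, where $\bar\phi=S^{-1}\phi=\frac1{\sqrt n}\sum_{h\in\mathcal{I}}\frac{1}{\sigma(h)}u(h)$; (3) the canonical tight frame vectors $\mu_i=S^{-1/2}\phi_i$ are geometrically uniform with generating group $\mathcal{Q}$: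 $\mu_i=U_i\mu$, where $\mu=S^{-1/2}\phi=\frac1{\sqrt n}\sum_{h\in\mathcal{I}}u(h)$; (4) the frame bounds of $\{\phi_i\}$ are $A=\sqrt n\min_{h\in\mathcal{I}}\hat s(h)$ and $B=\sqrt n\max_{h\in\mathcal{I}}\hat s(h)$.
   Context: Inner product $\langle x,y\rangle=x^*y$. A geometrically uniform (GU) frame is a set $\{\phi_i=U_i\phi\}_{i=1}^n$ spanning $\mathbb{C}^m$, where $\{U_1,\dots,U_n\}$ is an abelian group of $n$ distinct unitary $m\times m$ matrices. Frame operator $S=\sum_i\phi_i\phi_i^*$; frame bounds $A=\lambda_{\min}(S)$, $B=\lambda_{\max}(S)$; $S^{-1/2}$ is the positive definite square root of $S^{-1}$. For $h,q\in Q=\mathbb{Z}_{n_1}\times\cdots\times\mathbb{Z}_{n_p}$, $\langle h,q\rangle=\prod_{t=1}^p e^{-2\pi i h_tq_t/n_t}$ (here $\langle h,q\rangle$ denotes this Fourier kernel, not a vector inner product). *)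

theory Defs
  imports "Jordan_Normal_Form.Jordan_Normal_Form"
begin

definition ip :: "complex vec \<Rightarrow> complex vec \<Rightarrow> complex" where
  "ip x y = (\<Sum>k<dim_vec x. cnj (x $ k) * y $ k)"

definition adj :: "complex mat \<Rightarrow> complex mat" where
  "adj A = mat (dim_col A) (dim_row A) (\<lambda>(i,j). cnj (A $$ (j,i)))"

definition unitary_m :: "nat \<Rightarrow> complex mat \<Rightarrow> bool" where
  "unitary_m m U \<longleftrightarrow> U \<in> carrier_mat m m \<and> adj U * U = 1\<^sub>m m \<and> U * adj U = 1\<^sub>m m"

definition hermitian_m :: "nat \<Rightarrow> complex mat \<Rightarrow> bool" where
  "hermitian_m m R \<longleftrightarrow> R \<in> carrier_mat m m \<and> adj R = R"

definition posdef_m :: "nat \<Rightarrow> complex mat \<Rightarrow> bool" where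
  "posdef_m m R \<longleftrightarrow> hermitian_m m R \<and>
     (\<forall>x \<in> carrier_vec m. x \<noteq> 0\<^sub>v m \<longrightarrow> 0 < Re (ip x (R *\<^sub>v x)))"

text \<open>Singular values of a (k x n) matrix A, listed with multiplicity as the n nonnegative
  square roots of the eigenvalues (with algebraic multiplicity) of the n x n matrix A^* A.\<close>
definition is_singular_values :: "complex mat \<Rightarrow> real multiset \<Rightarrow> bool" where
  "is_singular_values A M \<longleftrightarrow> (\<forall>x \<in># M. 0 \<le> x) \<and>
     char_poly (adj A * A) = (\<Prod>x \<in># M. [:- complex_of_real (x^2), 1:])"

definition lam_min :: "complex mat \<Rightarrow> real" where
  "lam_min S = Min (Re ` {e. eigenvalue S e})"
definition lam_max :: "complex mat \<Rightarrow> real" where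
  "lam_max S = Max (Re ` {e. eigenvalue S e})"

definition Qset :: "nat list \<Rightarrow> (nat \<Rightarrow> nat) set" where
  "Qset ns = {q. (\<forall>t < length ns. q t < ns ! t) \<and> (\<forall>t \<ge> length ns. q t = 0)}"

definition qadd :: "nat list \<Rightarrow> (nat \<Rightarrow> nat) \<Rightarrow> (nat \<Rightarrow> nat) \<Rightarrow> (nat \<Rightarrow> nat)" where
  "qadd ns q q' = (\<lambda>t. if t < length ns then (q t + q' t) mod (ns ! t) else 0)"

definition qzero :: "nat \<Rightarrow> nat" where
  "qzero = (\<lambda>_. 0)"

definition chi :: "nat list \<Rightarrow> (nat \<Rightarrow> nat) \<Rightarrow> (nat \<Rightarrow> nat) \<Rightarrow> complex" where
  "chi ns h q = (\<Prod>t < length ns.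
      exp (- (2 * complex_of_real pi * \<i> * of_nat (h t * q t) / of_nat (ns ! t))))"

definition fvec :: "(nat \<Rightarrow> complex mat) \<Rightarrow> complex vec \<Rightarrow> nat \<Rightarrow> complex vec" where
  "fvec U \<phi> i = U i *\<^sub>v \<phi>"

definition Phi_mat :: "nat \<Rightarrow> nat \<Rightarrow> (nat \<Rightarrow> complex mat) \<Rightarrow> complex vec \<Rightarrow> complex mat" where
  "Phi_mat m n U \<phi> = mat m n (\<lambda>(r,i). fvec U \<phi> i $ r)"

definition frame_op :: "nat \<Rightarrow> nat \<Rightarrow> (nat \<Rightarrow> complex mat) \<Rightarrow> complex vec \<Rightarrow> complex mat" where
  "frame_op m n U \<phi> = mat m m (\<lambda>(r,c). \<Sum>i<n. fvec U \<phi> i $ r * cnj (fvec U \<phi> i $ c))"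

definition phiq :: "nat \<Rightarrow> (nat \<Rightarrow> complex mat) \<Rightarrow> (nat \<Rightarrow> (nat \<Rightarrow> nat)) \<Rightarrow> complex vec
     \<Rightarrow> (nat \<Rightarrow> nat) \<Rightarrow> complex vec" where
  "phiq n U \<psi> \<phi> q = fvec U \<phi> (the_inv_into {..<n} \<psi> q)"

definition sfun :: "nat \<Rightarrow> (nat \<Rightarrow> complex mat) \<Rightarrow> (nat \<Rightarrow> (nat \<Rightarrow> nat)) \<Rightarrow> complex vec
     \<Rightarrow> (nat \<Rightarrow> nat) \<Rightarrow> complex" where
  "sfun n U \<psi> \<phi> q = ip (phiq n U \<psi> \<phi> qzero) (phiq n U \<psi> \<phi> q)"

definition shat :: "nat list \<Rightarrow> nat \<Rightarrow> (nat \<Rightarrow> complex mat) \<Rightarrow> (nat \<Rightarrow> (nat \<Rightarrow> nat)) \<Rightarrow> complex vec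
     \<Rightarrow> (nat \<Rightarrow> nat) \<Rightarrow> complex" where
  "shat ns n U \<psi> \<phi> h =
     (1 / complex_of_real (sqrt (real n))) * (\<Sum>q \<in> Qset ns. chi ns h q * sfun n U \<psi> \<phi> q)"

definition phihat :: "nat list \<Rightarrow> nat \<Rightarrow> nat \<Rightarrow> (nat \<Rightarrow> complex mat) \<Rightarrow> (nat \<Rightarrow> (nat \<Rightarrow> nat))
     \<Rightarrow> complex vec \<Rightarrow> (nat \<Rightarrow> nat) \<Rightarrow> complex vec" where
  "phihat ns m n U \<psi> \<phi> h = vec m (\<lambda>r.
     (1 / complex_of_real (sqrt (real n))) * (\<Sum>q \<in> Qset ns. chi ns h q * phiq n U \<psi> \<phi> q $ r))"

text \<open>sigma(h) = n^(1/4) sqrt(shat h) (shat h is shown to be real and nonnegative).\<close>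
definition sigma :: "nat list \<Rightarrow> nat \<Rightarrow> (nat \<Rightarrow> complex mat) \<Rightarrow> (nat \<Rightarrow> (nat \<Rightarrow> nat)) \<Rightarrow> complex vec
     \<Rightarrow> (nat \<Rightarrow> nat) \<Rightarrow> real" where
  "sigma ns n U \<psi> \<phi> h = root 4 (real n) * sqrt (Re (shat ns n U \<psi> \<phi> h))"

definition Iset :: "nat list \<Rightarrow> nat \<Rightarrow> (nat \<Rightarrow> complex mat) \<Rightarrow> (nat \<Rightarrow> (nat \<Rightarrow> nat)) \<Rightarrow> complex vec
     \<Rightarrow> (nat \<Rightarrow> nat) set" where
  "Iset ns n U \<psi> \<phi> = {h \<in> Qset ns. sigma ns n U \<psi> \<phi> h \<noteq> 0}"

definition uvec :: "nat list \<Rightarrow> nat \<Rightarrow> nat \<Rightarrow> (nat \<Rightarrow> complex mat) \<Rightarrow> (nat \<Rightarrow> (nat \<Rightarrow> nat))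
     \<Rightarrow> complex vec \<Rightarrow> (nat \<Rightarrow> nat) \<Rightarrow> complex vec" where
  "uvec ns m n U \<psi> \<phi> h =
     (1 / complex_of_real (sigma ns n U \<psi> \<phi> h)) \<cdot>\<^sub>v phihat ns m n U \<psi> \<phi> h"

end

theory Submission
  imports Defs
begin


lemma ip_vsum:
  fixes c :: "'b \<Rightarrow> complex"
  assumes "x \<in> carrier_vec m"
  shows "ip x (vec m (\<lambda>r. \<Sum>a\<in>A. c a * w a $ r)) = (\<Sum>a\<in>A. c a * ip x (w a))"
proof -
  have "ip x (vec m (\<lambda>r. \<Sum>a\<in>A. c a * w a $ r)) = (\<Sum>k<m. \<Sum>a\<in>A. cnj (x $ k) * (c a * w a $ k))"
    using assms by (simp add: ip_def sum_distrib_left)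
  also have "\<dots> = (\<Sum>a\<in>A. \<Sum>k<m. c a * (cnj (x $ k) * w a $ k))"
    by (subst sum.swap) (simp add: algebra_simps)
  also have "\<dots> = (\<Sum>a\<in>A. c a * ip x (w a))"
    using assms by (simp add: ip_def sum_distrib_left)
  finally show ?thesis .
qed

lemma ip_smult_left: "ip (c \<cdot>\<^sub>v x) y = cnj c * ip x y"
  by (simp add: ip_def sum_distrib_left algebra_simps)

lemma ip_smult_right: assumes "y \<in> carrier_vec m" "x \<in> carrier_vec m"
  shows "ip x (c \<cdot>\<^sub>v y) = c * ip x y"
  using assms by (simp add: ip_def sum_distrib_left algebra_simps)

lemma ip_conj: assumes "x \<in> carrier_vec m" "y \<in> carrier_vec m"
  shows "ip y x = cnj (ip x y)"
  using assms by (simp add: ip_def mult.commute)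

lemma cnj_mult_self: "cnj z * z = complex_of_real ((cmod z)^2)"
  using complex_norm_square by (metis mult.commute complex_cnj_mult)

lemma ip_self: "ip x x = complex_of_real (\<Sum>k<dim_vec x. (cmod (x $ k))^2)"
  unfolding ip_def of_real_sum by (simp add: cnj_mult_self)

lemma ip_self_Re: "Re (ip x x) = (\<Sum>k<dim_vec x. (cmod (x $ k))^2)" "Im (ip x x) = 0"
  by (simp_all add: ip_self)

lemma ip_self_nonneg: "0 \<le> Re (ip x x)"
  by (simp add: ip_self_Re sum_nonneg)

lemma ip_self_zero: assumes "x \<in> carrier_vec m" "ip x x = 0" shows "x = 0\<^sub>v m"
proof -
  have "(\<Sum>k<dim_vec x. (cmod (x $ k))^2) = 0" using assms(2) ip_self_Re(1)[of x] by simp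
  then have "\<forall>k\<in>{..<dim_vec x}. (cmod (x $ k))^2 = 0"
    by (subst sum_nonneg_eq_0_iff[symmetric]) auto
  then show ?thesis using assms(1) by (intro eq_vecI) auto
qed

lemma mult_vsum:
  fixes M :: "complex mat" and c :: "'b \<Rightarrow> complex"
  assumes "M \<in> carrier_mat k m" and w: "\<And>a. a \<in> A \<Longrightarrow> w a \<in> carrier_vec m"
  shows "M *\<^sub>v vec m (\<lambda>r. \<Sum>a\<in>A. c a * w a $ r) = vec k (\<lambda>r. \<Sum>a\<in>A. c a * (M *\<^sub>v w a) $ r)"
proof (rule eq_vecI)
  fix i assume i: "i < dim_vec (vec k (\<lambda>r. \<Sum>a\<in>A. c a * (M *\<^sub>v w a) $ r))"
  then have i': "i < k" by simp
  have "(M *\<^sub>v vec m (\<lambda>r. \<Sum>a\<in>A. c a * w a $ r)) $ i = (\<Sum>j<m. M $$ (i,j) * (\<Sum>a\<in>A. c a * w a $ j))"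
    using assms i' by (simp add: scalar_prod_def row_def lessThan_atLeast0)
  also have "\<dots> = (\<Sum>a\<in>A. c a * (\<Sum>j<m. M $$ (i,j) * w a $ j))"
    unfolding sum_distrib_left by (subst sum.swap) (simp add: mult.left_commute)
  also have "\<dots> = vec k (\<lambda>r. \<Sum>a\<in>A. c a * (M *\<^sub>v w a) $ r) $ i"
    using assms(1) i' by (auto simp: scalar_prod_def row_def lessThan_atLeast0 carrier_vecD[OF w] intro!: sum.cong)
  finally show "(M *\<^sub>v vec m (\<lambda>r. \<Sum>a\<in>A. c a * w a $ r)) $ i = vec k (\<lambda>r. \<Sum>a\<in>A. c a * (M *\<^sub>v w a) $ r) $ i" .
qed (use assms in simp)

lemma adj_carrier: "A \<in> carrier_mat k m \<Longrightarrow> adj A \<in> carrier_mat m k"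
  by (simp add: adj_def)

lemma ip_adj:
  assumes A: "A \<in> carrier_mat m m" and x: "x \<in> carrier_vec m" and y: "y \<in> carrier_vec m"
  shows "ip x (A *\<^sub>v y) = ip (adj A *\<^sub>v x) y"
proof -
  have "ip x (A *\<^sub>v y) = (\<Sum>k<m. cnj (x $ k) * (\<Sum>j<m. A $$ (k,j) * y $ j))"
    using assms by (simp add: ip_def scalar_prod_def row_def lessThan_atLeast0)
  also have "\<dots> = (\<Sum>j<m. \<Sum>k<m. cnj (x $ k) * A $$ (k,j) * y $ j)"
    unfolding sum_distrib_left by (subst sum.swap) (simp add: mult.left_commute mult.assoc)
  also have "\<dots> = (\<Sum>j<m. cnj (\<Sum>k<m. cnj (A $$ (k,j)) * x $ k) * y $ j)"
    by (simp add: sum_distrib_left sum_distrib_right mult.commute mult.left_commute)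
  also have "\<dots> = ip (adj A *\<^sub>v x) y"
    using assms by (simp add: ip_def adj_def scalar_prod_def row_def lessThan_atLeast0)
  finally show ?thesis .
qed

lemma unitary_ip:
  assumes "unitary_m m V" "x \<in> carrier_vec m" "y \<in> carrier_vec m"
  shows "ip (V *\<^sub>v x) (V *\<^sub>v y) = ip x y"
proof -
  have V: "V \<in> carrier_mat m m" "adj V * V = 1\<^sub>m m" using assms(1) unfolding unitary_m_def by auto
  have "ip (V *\<^sub>v x) (V *\<^sub>v y) = ip (adj V *\<^sub>v (V *\<^sub>v x)) y"
    using V assms by (subst ip_adj[of V m]) auto
  also have "adj V *\<^sub>v (V *\<^sub>v x) = (adj V * V) *\<^sub>v x"
    using V assms by (metis assoc_mult_mat_vec adj_carrier)
  also have "\<dots> = x" using V assms by simp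
  finally show ?thesis .
qed

lemma mat_eq_by_vec:
  fixes A B :: "complex mat"
  assumes "A \<in> carrier_mat m k" "B \<in> carrier_mat m k"
    and "\<And>v. v \<in> carrier_vec k \<Longrightarrow> A *\<^sub>v v = B *\<^sub>v v"
  shows "A = B"
proof (rule eq_matI)
  fix i j assume ij: "i < dim_row B" "j < dim_col B"
  have "(C *\<^sub>v unit_vec k j) $ i = C $$ (i,j)" if C: "C \<in> carrier_mat m k" and "i < m" "j < k" for C :: "complex mat"
  proof -
    have "(C *\<^sub>v unit_vec k j) $ i = (\<Sum>ia<k. C $$ (i, ia) * (if ia = j then 1 else 0))"
      using that by (simp add: scalar_prod_def row_def unit_vec_def lessThan_atLeast0)
    also have "\<dots> = (\<Sum>ia<k. if ia = j then C $$ (i, ia) else 0)"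
      by (rule sum.cong) auto
    also have "\<dots> = C $$ (i,j)" using that by simp
    finally show ?thesis .
  qed
  then show "A $$ (i,j) = B $$ (i,j)" using assms ij
    by (metis carrier_matD(1,2) unit_vec_carrier)
qed (use assms in auto)


lemma mod_add_cancel_aux:
  assumes "(a + b) mod n = (a + c) mod (n::nat)" "b < n" "c < n" "c \<le> b"
  shows "b = c"
proof -
  have "n dvd (a + b) - (a + c)" using assms(1,4) by (subst mod_eq_dvd_iff_nat[symmetric]) auto
  then have "n dvd b - c" by simp
  moreover have "b - c < n" using assms by auto
  ultimately have "b - c = 0" using nat_dvd_not_less by blast
  then show ?thesis using assms(4) by simp
qed

lemma mod_add_cancel:
  assumes "(a + b) mod n = (a + c) mod (n::nat)" "b < n" "c < n"
  shows "b = c"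
  using mod_add_cancel_aux[OF assms] mod_add_cancel_aux[OF assms(1)[symmetric] assms(3,2)]
  by linarith

definition ee :: "nat \<Rightarrow> nat \<Rightarrow> complex" where
  "ee N k = cis (- (2 * pi * real k / real N))"

lemma exp_ee: "exp (- (2 * complex_of_real pi * \<i> * of_nat k / of_nat N)) = ee N k"
  unfolding ee_def cis_conv_exp by (simp add: field_simps)

lemma chi_alt: "chi ns h q = (\<Prod>t<length ns. ee (ns!t) (h t * q t))"
  unfolding chi_def exp_ee ..

lemma ee_add: "ee N (a + b) = ee N a * ee N b"
proof -
  have "- (2 * pi * real (a + b) / real N) = - (2 * pi * real a / real N) + - (2 * pi * real b / real N)"
    by (simp add: add_divide_distrib distrib_left)
  then show ?thesis unfolding ee_def cis_mult by simp
qed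

lemma ee_period: assumes "0 < N" shows "ee N (x + N * y) = ee N x"
proof -
  have N: "real N \<noteq> 0" using assms by simp
  have "- (2 * pi * real (x + N * y) / real N) = - (2 * pi * real x / real N) + 2 * pi * real_of_int (- int y)"
    using N by (simp add: field_simps)
  then have "ee N (x + N * y) = ee N x * cis (2 * pi * real_of_int (- int y))"
    unfolding ee_def cis_mult by simp
  also have "cis (2 * pi * real_of_int (- int y)) = 1" by (rule cis_multiple_2pi) simp
  finally show ?thesis by simp
qed

lemma ee_mod: assumes "0 < N" shows "ee N (h * (a mod N)) = ee N (h * a)"
proof -
  have "h * a = h * (a mod N) + N * (h * (a div N))"
    by (metis add.commute mult.left_commute distrib_left mod_mult_div_eq)
  then show ?thesis using ee_period[OF assms] by simp
qed

lemma ee_cnj: "cnj (ee N a) * ee N a = 1"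
  unfolding ee_def cis_cnj cis_mult by simp

lemma chi_cnj: "cnj (chi ns h q) * chi ns h q = 1"
  unfolding chi_alt by (simp add: cnj_prod prod.distrib[symmetric] ee_cnj)

lemma chi_cnj': "chi ns h q * cnj (chi ns h q) = 1"
  using chi_cnj by (simp add: mult.commute)

lemma chi_sym: "chi ns h q = chi ns q h"
  unfolding chi_def by (simp add: mult.commute)

lemma chi_qadd:
  assumes "\<forall>t < length ns. 0 < ns ! t"
  shows "chi ns h (qadd ns q q') = chi ns h q * chi ns h q'"
proof -
  have "chi ns h (qadd ns q q') = (\<Prod>t<length ns. ee (ns!t) (h t * q t) * ee (ns!t) (h t * q' t))"
    unfolding chi_alt qadd_def using assms
    by (intro prod.cong refl) (simp add: ee_mod distrib_left ee_add)
  then show ?thesis unfolding chi_alt by (simp add: prod.distrib)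
qed

lemma chi_zero: "chi ns h qzero = 1"
  unfolding chi_alt qzero_def ee_def by simp

lemma ee_inj: assumes "a < N" "b < N" "ee N a = ee N b" shows "a = b"
proof -
  let ?x = "- (2 * pi * real a / real N)" and ?y = "- (2 * pi * real b / real N)"
  have N: "real N > 0" using assms by simp
  have "cis (?x - ?y) = cis ?x * cnj (cis ?y)"
    by (simp add: cis_cnj cis_mult)
  also have "\<dots> = 1" using assms(3) ee_cnj[of N b] unfolding ee_def by (simp add: mult.commute)
  finally have "cos (?x - ?y) = 1" by (metis cis.sel(1) one_complex.sel(1))
  then obtain k :: int where k: "?x - ?y = real_of_int k * 2 * pi" by (auto simp: cos_one_2pi_int)
  have "real b - real a = real_of_int k * real N"
  proof -
    let ?X = "(real b - real a) / real N"
    have e: "?x - ?y = 2 * pi * ?X" using N by (simp add: field_simps)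
    have "?X = (2 * pi * ?X) / (2 * pi)" by simp
    also have "\<dots> = (real_of_int k * 2 * pi) / (2 * pi)" using k e by simp
    also have "\<dots> = real_of_int k" by simp
    finally have "?X = real_of_int k" .
    then show ?thesis using N by (simp add: field_simps)
  qed
  moreover have "\<bar>real b - real a\<bar> < real N" using assms by auto
  ultimately have "\<bar>real_of_int k\<bar> * real N < 1 * real N" by (simp add: abs_mult)
  then have "\<bar>real_of_int k\<bar> < 1" using N by (meson mult_less_cancel_right_pos)
  then have "k = 0" by linarith
  then show ?thesis using \<open>real b - real a = real_of_int k * real N\<close> by simp
qed

lemma qzero_in: "\<forall>t < length ns. 0 < ns ! t \<Longrightarrow> qzero \<in> Qset ns"
  unfolding Qset_def qzero_def by auto

lemma qadd_in: "\<forall>t < length ns. 0 < ns ! t \<Longrightarrow> qadd ns q q' \<in> Qset ns"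
  unfolding Qset_def qadd_def by auto

lemma chi_sep:
  assumes pos: "\<forall>t < length ns. 0 < ns ! t" and h: "h \<in> Qset ns" "h' \<in> Qset ns" "h \<noteq> h'"
  shows "\<exists>r \<in> Qset ns. chi ns h r \<noteq> chi ns h' r"
proof -
  obtain t where t: "h t \<noteq> h' t" using h(3) by auto
  have tl: "t < length ns"
  proof (rule ccontr)
    assume "\<not> t < length ns"
    then have "h t = 0" "h' t = 0" using h(1,2) unfolding Qset_def by auto
    then show False using t by simp
  qed
  have lt: "h t < ns ! t" "h' t < ns ! t" using h tl unfolding Qset_def by auto
  define r where "r = (\<lambda>s. if s = t then 1 else 0::nat)"
  have r: "r \<in> Qset ns" unfolding r_def Qset_def using lt t tl pos by auto
  have cr: "chi ns g r = ee (ns!t) (g t)" for g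
  proof -
    have "chi ns g r = (\<Prod>s<length ns. if s = t then ee (ns!t) (g t) else 1)"
      unfolding chi_alt r_def by (intro prod.cong refl) (auto simp: ee_def)
    then show ?thesis using tl by simp
  qed
  have "chi ns h r \<noteq> chi ns h' r" unfolding cr using ee_inj[OF lt] t by auto
  then show ?thesis using r by blast
qed

lemma qadd_bij:
  assumes pos: "\<forall>t < length ns. 0 < ns ! t" and fin: "finite (Qset ns)" and r: "r \<in> Qset ns"
  shows "bij_betw (qadd ns r) (Qset ns) (Qset ns)"
proof -
  have inj: "inj_on (qadd ns r) (Qset ns)"
  proof (rule inj_onI)
    fix q q' assume q: "q \<in> Qset ns" "q' \<in> Qset ns" and e: "qadd ns r q = qadd ns r q'"
    show "q = q'"
    proof
      fix t show "q t = q' t"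
      proof (cases "t < length ns")
        case True
        then have "(r t + q t) mod (ns!t) = (r t + q' t) mod (ns!t)"
          using fun_cong[OF e, of t] unfolding qadd_def by simp
        then show ?thesis by (rule mod_add_cancel) (use q True in \<open>auto simp: Qset_def\<close>)
      next
        case False then show ?thesis using q by (auto simp: Qset_def)
      qed
    qed
  qed
  have "qadd ns r ` Qset ns = Qset ns"
    by (rule endo_inj_surj[OF fin _ inj]) (use qadd_in[OF pos] in auto)
  then show ?thesis using inj unfolding bij_betw_def by simp
qed

lemma sum_qadd:
  assumes pos: "\<forall>t < length ns. 0 < ns ! t" and fin: "finite (Qset ns)" and r: "r \<in> Qset ns"
  shows "(\<Sum>q\<in>Qset ns. f (qadd ns r q)) = (\<Sum>q\<in>Qset ns. f q)"
  using sum.reindex_bij_betw[OF qadd_bij[OF assms], of f] .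

lemma chi_orth:
  assumes pos: "\<forall>t < length ns. 0 < ns ! t" and fin: "finite (Qset ns)"
    and h: "h \<in> Qset ns" "h' \<in> Qset ns"
  shows "(\<Sum>q\<in>Qset ns. chi ns h q * cnj (chi ns h' q)) = (if h = h' then of_nat (card (Qset ns)) else 0)"
proof (cases "h = h'")
  case True then show ?thesis by (simp add: chi_cnj')
next
  case False
  obtain r where r: "r \<in> Qset ns" "chi ns h r \<noteq> chi ns h' r" using chi_sep[OF pos h False] by blast
  define f where "f q = chi ns h q * cnj (chi ns h' q)" for q
  have fr: "f r \<noteq> 1"
  proof
    assume "f r = 1"
    then have "chi ns h r * (cnj (chi ns h' r) * chi ns h' r) = chi ns h' r"
      unfolding f_def by (metis mult.assoc mult_1)
    then show False using r(2) by (simp add: chi_cnj)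
  qed
  have "(\<Sum>q\<in>Qset ns. f q) = (\<Sum>q\<in>Qset ns. f (qadd ns r q))" by (rule sum_qadd[OF pos fin r(1), symmetric])
  also have "\<dots> = (\<Sum>q\<in>Qset ns. f r * f q)"
    unfolding f_def chi_qadd[OF pos] by (intro sum.cong refl) (simp add: ac_simps)
  also have "\<dots> = f r * (\<Sum>q\<in>Qset ns. f q)" by (simp add: sum_distrib_left)
  finally have "(1 - f r) * (\<Sum>q\<in>Qset ns. f q) = 0" by (simp add: algebra_simps)
  then have "(\<Sum>q\<in>Qset ns. f q) = 0" using fr by simp
  then show ?thesis using False unfolding f_def by simp
qed


locale gu =
  fixes m n :: nat and ns :: "nat list"
    and U :: "nat \<Rightarrow> complex mat" and \<phi> :: "complex vec"
    and \<psi> :: "nat \<Rightarrow> (nat \<Rightarrow> nat)"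
  assumes m_pos: "0 < m"
    and ns_pos: "\<forall>t < length ns. 0 < ns ! t"
    and phi_dim: "\<phi> \<in> carrier_vec m"
    and unitary: "\<forall>i < n. unitary_m m (U i)"
    and distinct: "inj_on U {..<n}"
    and closed: "\<forall>i < n. \<forall>j < n. \<exists>k < n. U i * U j = U k"
    and abelian: "\<forall>i < n. \<forall>j < n. U i * U j = U j * U i"
    and iso_bij: "bij_betw \<psi> {..<n} (Qset ns)"
    and iso_hom: "\<forall>i < n. \<forall>j < n. \<forall>k < n. U i * U j = U k \<longrightarrow> \<psi> k = qadd ns (\<psi> i) (\<psi> j)"
    and spanning: "\<forall>v \<in> carrier_vec m. \<exists>c \<in> carrier_vec n. v = Phi_mat m n U \<phi> *\<^sub>v c"
begin

abbreviation "Q \<equiv> Qset ns"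
definition "inv\<psi> q = the_inv_into {..<n} \<psi> q"
definition "V q = U (inv\<psi> q)"
definition "ph q = V q *\<^sub>v \<phi>"
abbreviation "phat \<equiv> phihat ns m n U \<psi> \<phi>"
abbreviation "sh \<equiv> shat ns n U \<psi> \<phi>"
abbreviation "sg \<equiv> sigma ns n U \<psi> \<phi>"
abbreviation "I \<equiv> Iset ns n U \<psi> \<phi>"
abbreviation "u \<equiv> uvec ns m n U \<psi> \<phi>"
abbreviation "sn \<equiv> complex_of_real (sqrt (real n))"

lemma finQ: "finite Q"
  using bij_betw_finite[OF iso_bij] by simp

lemma cardQ: "card Q = n"
  using bij_betw_same_card[OF iso_bij] by simp

lemma n_pos: "0 < n"
proof -
  have "Q \<noteq> {}" using qzero_in[OF ns_pos] by auto
  then have "0 < card Q" using finQ by (simp add: card_gt_0_iff)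
  then show ?thesis using cardQ by simp
qed

lemma sn_nz: "sn \<noteq> 0" using n_pos by simp

lemma sn_sq: "sn * sn = of_nat n"
proof -
  have "sn * sn = complex_of_real (sqrt (real n) * sqrt (real n))" by (simp only: of_real_mult)
  then show ?thesis by simp
qed

lemma psi_in: "i < n \<Longrightarrow> \<psi> i \<in> Q"
  using iso_bij bij_betwE by blast

lemma inv_psi: "i < n \<Longrightarrow> inv\<psi> (\<psi> i) = i"
  unfolding inv\<psi>_def using iso_bij by (simp add: bij_betw_def the_inv_into_f_f)

lemma inv_in: "q \<in> Q \<Longrightarrow> inv\<psi> q < n"
  unfolding inv\<psi>_def using the_inv_into_into[of \<psi> "{..<n}" q "{..<n}"] iso_bij
  unfolding bij_betw_def by auto

lemma psi_inv: "q \<in> Q \<Longrightarrow> \<psi> (inv\<psi> q) = q"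
  unfolding inv\<psi>_def using f_the_inv_into_f[of \<psi> "{..<n}" q] iso_bij
  unfolding bij_betw_def by auto

lemma V_unitary: "q \<in> Q \<Longrightarrow> unitary_m m (V q)"
  unfolding V_def using unitary inv_in by blast

lemma V_carrier: "q \<in> Q \<Longrightarrow> V q \<in> carrier_mat m m"
  using V_unitary unfolding unitary_m_def by blast

lemma V_adj: "q \<in> Q \<Longrightarrow> adj (V q) * V q = 1\<^sub>m m"
  using V_unitary unfolding unitary_m_def by blast

lemma V_mult: assumes "a \<in> Q" "b \<in> Q" shows "V (qadd ns a b) = V a * V b"
proof -
  let ?i = "inv\<psi> a" and ?j = "inv\<psi> b"
  obtain k where k: "k < n" "U ?i * U ?j = U k" using closed inv_in assms by blast
  then have "\<psi> k = qadd ns (\<psi> ?i) (\<psi> ?j)" using iso_hom inv_in[OF assms(1)] inv_in[OF assms(2)] by blast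
  then have "\<psi> k = qadd ns a b" using psi_inv assms by simp
  then have "inv\<psi> (qadd ns a b) = k" using inv_psi[OF k(1)] by simp
  then show ?thesis unfolding V_def using k by simp
qed

lemma qadd_zero: "qadd ns qzero qzero = qzero"
  unfolding qadd_def qzero_def by auto

lemma V_zero: "V qzero = 1\<^sub>m m"
proof -
  have z: "qzero \<in> Q" using qzero_in[OF ns_pos] .
  have e: "V qzero * V qzero = V qzero" using V_mult[OF z z] qadd_zero by simp
  have C: "V qzero \<in> carrier_mat m m" "adj (V qzero) \<in> carrier_mat m m"
    using V_carrier[OF z] adj_carrier by auto
  have "V qzero = (adj (V qzero) * V qzero) * V qzero" using V_adj[OF z] C by simp
  also have "\<dots> = adj (V qzero) * (V qzero * V qzero)" using C by (simp add: assoc_mult_mat)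
  also have "\<dots> = 1\<^sub>m m" using e V_adj[OF z] by simp
  finally show ?thesis .
qed

lemma ph_carrier: "q \<in> Q \<Longrightarrow> ph q \<in> carrier_vec m"
  unfolding ph_def using mult_mat_vec_carrier[OF V_carrier phi_dim] .

lemma ph_zero: "ph qzero = \<phi>"
  unfolding ph_def V_zero using phi_dim by simp

lemma phiq_eq: "phiq n U \<psi> \<phi> q = ph q"
  unfolding phiq_def fvec_def ph_def V_def inv\<psi>_def ..

lemma fvec_eq: "i < n \<Longrightarrow> fvec U \<phi> i = ph (\<psi> i)"
  unfolding fvec_def ph_def V_def using inv_psi by simp

lemma U_eq: "i < n \<Longrightarrow> U i = V (\<psi> i)"
  unfolding V_def using inv_psi by simp

lemma phat_eq: "phat h = vec m (\<lambda>r. \<Sum>q\<in>Q. (chi ns h q / sn) * ph q $ r)"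
  unfolding phihat_def phiq_eq by (simp add: sum_distrib_left)

lemma phat_carrier: "phat h \<in> carrier_vec m"
  unfolding phihat_def by simp

lemma V_ph: assumes "r \<in> Q" "q \<in> Q" shows "V r *\<^sub>v ph q = ph (qadd ns r q)"
  unfolding ph_def using assms V_mult assoc_mult_mat_vec[OF V_carrier[OF assms(1)] V_carrier[OF assms(2)] phi_dim] by simp

lemma eig: assumes r: "r \<in> Q" shows "V r *\<^sub>v phat h = cnj (chi ns h r) \<cdot>\<^sub>v phat h"
proof -
  have "V r *\<^sub>v phat h = vec m (\<lambda>k. \<Sum>q\<in>Q. (chi ns h q / sn) * (V r *\<^sub>v ph q) $ k)"
    unfolding phat_eq by (rule mult_vsum[OF V_carrier[OF r]]) (rule ph_carrier)
  also have "\<dots> = vec m (\<lambda>k. \<Sum>q\<in>Q. (chi ns h q / sn) * ph (qadd ns r q) $ k)"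
    using V_ph[OF r] by simp
  finally have 1: "V r *\<^sub>v phat h = \<dots>" .
  have "chi ns h r \<cdot>\<^sub>v (V r *\<^sub>v phat h) = vec m (\<lambda>k. \<Sum>q\<in>Q. (chi ns h (qadd ns r q) / sn) * ph (qadd ns r q) $ k)"
    unfolding 1 chi_qadd[OF ns_pos] by (rule eq_vecI) (auto simp: sum_distrib_left intro!: sum.cong)
  also have "\<dots> = phat h"
  proof -
    have "(\<Sum>q\<in>Q. (chi ns h (qadd ns r q) / sn) * ph (qadd ns r q) $ k) = (\<Sum>q\<in>Q. (chi ns h q / sn) * ph q $ k)" for k
      by (rule sum_qadd[OF ns_pos finQ r])
    then show ?thesis unfolding phat_eq by simp
  qed
  finally have 2: "chi ns h r \<cdot>\<^sub>v (V r *\<^sub>v phat h) = phat h" .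
  have "V r *\<^sub>v phat h = (cnj (chi ns h r) * chi ns h r) \<cdot>\<^sub>v (V r *\<^sub>v phat h)" by (simp add: chi_cnj)
  also have "\<dots> = cnj (chi ns h r) \<cdot>\<^sub>v phat h" by (simp add: smult_smult_assoc[symmetric] 2)
  finally show ?thesis .
qed


lemma adj_eig: assumes r: "r \<in> Q" shows "adj (V r) *\<^sub>v phat h = chi ns h r \<cdot>\<^sub>v phat h"
proof -
  let ?A = "adj (V r)" and ?c = "chi ns h r"
  have A: "?A \<in> carrier_mat m m" using adj_carrier V_carrier[OF r] by blast
  have "?A *\<^sub>v (V r *\<^sub>v phat h) = (?A * V r) *\<^sub>v phat h"
    using assoc_mult_mat_vec[OF A V_carrier[OF r] phat_carrier] by simp
  also have "\<dots> = phat h" using V_adj[OF r] phat_carrier by simp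
  finally have 1: "cnj ?c \<cdot>\<^sub>v (?A *\<^sub>v phat h) = phat h"
    unfolding eig[OF r] using A phat_carrier by (simp add: mult_mat_vec)
  have "?A *\<^sub>v phat h = (?c * cnj ?c) \<cdot>\<^sub>v (?A *\<^sub>v phat h)" by (simp add: chi_cnj')
  also have "\<dots> = ?c \<cdot>\<^sub>v phat h" by (simp add: smult_smult_assoc[symmetric] 1)
  finally show ?thesis .
qed

lemma ip_phi_phat: "ip \<phi> (phat h) = sh h"
proof -
  have "ip \<phi> (phat h) = (\<Sum>q\<in>Q. (chi ns h q / sn) * ip \<phi> (ph q))"
    unfolding phat_eq by (rule ip_vsum[OF phi_dim])
  also have "\<dots> = sh h"
    unfolding shat_def sfun_def phiq_eq ph_zero by (simp add: sum_distrib_left)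
  finally show ?thesis .
qed

lemma ip_ph_phat: assumes q: "q \<in> Q" shows "ip (ph q) (phat h) = chi ns h q * sh h"
proof -
  have A: "adj (V q) \<in> carrier_mat m m" using adj_carrier V_carrier[OF q] by blast
  have "ip (phat h) (ph q) = ip (adj (V q) *\<^sub>v phat h) \<phi>"
    unfolding ph_def by (rule ip_adj[OF V_carrier[OF q] phat_carrier phi_dim])
  also have "\<dots> = cnj (chi ns h q) * ip (phat h) \<phi>" unfolding adj_eig[OF q] ip_smult_left ..
  also have "ip (phat h) \<phi> = cnj (sh h)"
    using ip_conj[OF phi_dim phat_carrier] ip_phi_phat by simp
  finally have "ip (phat h) (ph q) = cnj (chi ns h q) * cnj (sh h)" .
  then show ?thesis using ip_conj[OF phat_carrier ph_carrier[OF q]] by simp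
qed

lemma ip_phat_self: "ip (phat h) (phat h) = sn * cnj (sh h)"
proof -
  have "ip (phat h) (phat h) = ip (phat h) (vec m (\<lambda>r. \<Sum>q\<in>Q. (chi ns h q / sn) * ph q $ r))"
    by (simp only: phat_eq[symmetric])
  also have "\<dots> = (\<Sum>q\<in>Q. (chi ns h q / sn) * ip (phat h) (ph q))"
    by (rule ip_vsum[OF phat_carrier])
  also have "\<dots> = (\<Sum>q\<in>Q. (chi ns h q / sn) * (cnj (chi ns h q) * cnj (sh h)))"
  proof (rule sum.cong[OF refl])
    fix q assume q: "q \<in> Q"
    have "ip (phat h) (ph q) = cnj (ip (ph q) (phat h))"
      using ip_conj[OF ph_carrier[OF q] phat_carrier] by simp
    then show "(chi ns h q / sn) * ip (phat h) (ph q) = (chi ns h q / sn) * (cnj (chi ns h q) * cnj (sh h))"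
      using ip_ph_phat[OF q] by simp
  qed
  also have "\<dots> = (\<Sum>q\<in>Q. cnj (sh h) / sn)"
    by (rule sum.cong[OF refl]) (simp add: chi_cnj' mult.assoc[symmetric])
  also have "\<dots> = of_nat n * cnj (sh h) / sn" using cardQ by simp
  also have "\<dots> = sn * cnj (sh h)" using sn_sq sn_nz by (simp add: field_simps)
  finally show ?thesis .
qed

lemma sh_real: "sh h = complex_of_real (Re (sh h))" "0 \<le> Re (sh h)"
proof -
  let ?N = "Re (ip (phat h) (phat h))"
  have ipr: "ip (phat h) (phat h) = complex_of_real ?N" using ip_self_Re(2) by (simp add: complex_eq_iff)
  have N0: "0 \<le> ?N" by (rule ip_self_nonneg)
  have "cnj (sh h) = ip (phat h) (phat h) / sn" using ip_phat_self sn_nz by simp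
  then have "cnj (sh h) = complex_of_real (?N / sqrt (real n))" using ipr by simp
  then have e: "sh h = complex_of_real (?N / sqrt (real n))" by (metis complex_cnj_complex_of_real complex_cnj_cnj)
  then show "sh h = complex_of_real (Re (sh h))" by simp
  show "0 \<le> Re (sh h)" using e N0 by simp
qed

lemma root4_sq: "(root 4 (real n))^2 = sqrt (real n)"
proof -
  have "root 4 (real n) = sqrt (sqrt (real n))"
    using real_root_mult_exp[of 2 2 "real n"] by (simp add: sqrt_def)
  then show ?thesis by simp
qed

lemma sg_nonneg: "0 \<le> sg h"
  unfolding sigma_def using sh_real(2) by simp

lemma sg_sq: "(sg h)^2 = sqrt (real n) * Re (sh h)"
  unfolding sigma_def power_mult_distrib root4_sq using sh_real(2) by simp

lemma sg_sq_ip: "complex_of_real ((sg h)^2) = ip (phat h) (phat h)"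
proof -
  have "ip (phat h) (phat h) = sn * complex_of_real (Re (sh h))"
    using ip_phat_self sh_real(1)[of h] by (metis complex_cnj_complex_of_real)
  then show ?thesis unfolding sg_sq by simp
qed

lemma sg_sq_c: "complex_of_real ((sg h)^2) = sn * sh h"
  unfolding sg_sq using sh_real(1)[of h] by (metis of_real_mult)

lemma phat_zero: "sg h = 0 \<Longrightarrow> phat h = 0\<^sub>v m"
  using sg_sq_ip[of h] ip_self_zero[OF phat_carrier] by simp

lemma I_sub: "I \<subseteq> Q" unfolding Iset_def by auto

lemma finI: "finite I" using finite_subset[OF I_sub finQ] .

lemma sg_pos: "h \<in> I \<Longrightarrow> 0 < sg h"
  using sg_nonneg[of h] unfolding Iset_def by auto

lemma phat_notI: "h \<in> Q \<Longrightarrow> h \<notin> I \<Longrightarrow> phat h = 0\<^sub>v m"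
  using phat_zero unfolding Iset_def by auto

lemma u_carrier: "u h \<in> carrier_vec m"
  unfolding uvec_def using phat_carrier by simp

lemma phat_u: assumes "h \<in> I" shows "phat h = complex_of_real (sg h) \<cdot>\<^sub>v u h"
proof -
  have "sg h \<noteq> 0" using sg_pos[OF assms] by simp
  then show ?thesis unfolding uvec_def smult_smult_assoc using phat_carrier by simp
qed

lemma phat_orth: assumes h: "h \<in> Q" "h' \<in> Q" "h \<noteq> h'" shows "ip (phat h) (phat h') = 0"
proof -
  obtain r where r: "r \<in> Q" "chi ns h r \<noteq> chi ns h' r" using chi_sep[OF ns_pos h] by blast
  have "ip (phat h) (phat h') = ip (V r *\<^sub>v phat h) (V r *\<^sub>v phat h')"
    using unitary_ip[OF V_unitary[OF r(1)] phat_carrier phat_carrier] by simp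
  also have "\<dots> = (chi ns h r * cnj (chi ns h' r)) * ip (phat h) (phat h')"
    unfolding eig[OF r(1)] ip_smult_left ip_smult_right[OF phat_carrier phat_carrier] by simp
  finally have e: "(1 - chi ns h r * cnj (chi ns h' r)) * ip (phat h) (phat h') = 0"
    by (simp add: algebra_simps)
  have "chi ns h r * cnj (chi ns h' r) \<noteq> 1"
  proof
    assume "chi ns h r * cnj (chi ns h' r) = 1"
    then have "chi ns h r * (cnj (chi ns h' r) * chi ns h' r) = chi ns h' r" by (metis mult.assoc mult_1)
    then show False using r(2) by (simp add: chi_cnj)
  qed
  then show ?thesis using e by simp
qed

lemma u_orth: assumes h: "h \<in> I" "h' \<in> I" shows "ip (u h) (u h') = (if h = h' then 1 else 0)"
proof -
  have e: "ip (u h) (u h') = complex_of_real (1 / sg h) * complex_of_real (1 / sg h') * ip (phat h) (phat h')"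
    unfolding uvec_def ip_smult_left ip_smult_right[OF phat_carrier phat_carrier] by simp
  show ?thesis
  proof (cases "h = h'")
    case True
    have "sg h \<noteq> 0" using sg_pos[OF h(1)] by simp
    then have nz: "complex_of_real (sg h) \<noteq> 0" by simp
    have "ip (u h) (u h') = complex_of_real (1 / sg h) * complex_of_real (1 / sg h) * complex_of_real ((sg h)^2)"
      using e True sg_sq_ip[of h] by simp
    also have "\<dots> = 1" using nz by (simp add: power2_eq_square)
    finally show ?thesis using True by simp
  next
    case False
    then show ?thesis using e phat_orth[OF subsetD[OF I_sub h(1)] subsetD[OF I_sub h(2)] False] by simp
  qed
qed

end

context gu begin

lemma inv_fourier: assumes q: "q \<in> Q"
  shows "ph q = vec m (\<lambda>k. \<Sum>h\<in>Q. (cnj (chi ns h q) / sn) * phat h $ k)"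
proof (rule eq_vecI)
  fix k assume "k < dim_vec (vec m (\<lambda>k. \<Sum>h\<in>Q. (cnj (chi ns h q) / sn) * phat h $ k))"
  then have k: "k < m" by simp
  have "(\<Sum>h\<in>Q. (cnj (chi ns h q) / sn) * phat h $ k)
      = (\<Sum>h\<in>Q. \<Sum>q'\<in>Q. (chi ns h q' * cnj (chi ns h q)) / (sn * sn) * ph q' $ k)"
    unfolding phat_eq using k by (simp add: sum_distrib_left ac_simps)
  also have "\<dots> = (\<Sum>q'\<in>Q. (\<Sum>h\<in>Q. chi ns h q' * cnj (chi ns h q)) / (sn * sn) * ph q' $ k)"
    by (subst sum.swap) (simp add: sum_distrib_right sum_divide_distrib)
  also have "\<dots> = (\<Sum>q'\<in>Q. (if q' = q then 1 else 0) * ph q' $ k)"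
  proof (rule sum.cong[OF refl])
    fix q' assume q': "q' \<in> Q"
    have e: "(\<Sum>h\<in>Q. chi ns h q' * cnj (chi ns h q)) = (\<Sum>h\<in>Q. chi ns q' h * cnj (chi ns q h))"
      by (simp add: chi_sym[of ns _ q'] chi_sym[of ns _ q])
    show "(\<Sum>h\<in>Q. chi ns h q' * cnj (chi ns h q)) / (sn * sn) * ph q' $ k = (if q' = q then 1 else 0) * ph q' $ k"
      unfolding e chi_orth[OF ns_pos finQ q' q] sn_sq cardQ using n_pos by simp
  qed
  also have "\<dots> = ph q $ k" using q finQ by (simp add: if_distrib[where f="\<lambda>x. x * _"] cong: if_cong)
  finally show "ph q $ k = vec m (\<lambda>k. \<Sum>h\<in>Q. (cnj (chi ns h q) / sn) * phat h $ k) $ k"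
    using k by simp
qed (use ph_carrier[OF q] in simp)

lemma ph_u: assumes q: "q \<in> Q"
  shows "ph q = vec m (\<lambda>k. \<Sum>h\<in>I. (cnj (chi ns h q) * sg h / sn) * u h $ k)"
proof -
  have "(\<Sum>h\<in>Q. (cnj (chi ns h q) / sn) * phat h $ k) = (\<Sum>h\<in>I. (cnj (chi ns h q) * sg h / sn) * u h $ k)"
    if k: "k < m" for k
  proof -
    have "(\<Sum>h\<in>Q. (cnj (chi ns h q) / sn) * phat h $ k) = (\<Sum>h\<in>I. (cnj (chi ns h q) / sn) * phat h $ k)"
      by (rule sum.mono_neutral_right[OF finQ I_sub]) (use phat_notI k in auto)
    also have "\<dots> = (\<Sum>h\<in>I. (cnj (chi ns h q) * sg h / sn) * u h $ k)"
      by (rule sum.cong[OF refl]) (use k in \<open>auto simp: phat_u u_carrier[THEN carrier_vecD]\<close>)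
    finally show ?thesis .
  qed
  then show ?thesis by (subst inv_fourier[OF q]) (auto intro!: eq_vecI)
qed

lemma span_u: assumes v: "v \<in> carrier_vec m"
  shows "\<exists>d. v = vec m (\<lambda>k. \<Sum>h\<in>I. d h * u h $ k)"
proof -
  obtain c where c: "c \<in> carrier_vec n" "v = Phi_mat m n U \<phi> *\<^sub>v c" using spanning v by blast
  define a where "a h q = cnj (chi ns h q) * sg h / sn" for h q
  define d where "d h = (\<Sum>i<n. c $ i * a h (\<psi> i))" for h
  have "v $ k = (\<Sum>h\<in>I. d h * u h $ k)" if k: "k < m" for k
  proof -
    have "v $ k = (\<Sum>i<n. (ph (\<psi> i)) $ k * c $ i)"
      unfolding c(2) Phi_mat_def using k c(1) fvec_eq
      by (simp add: scalar_prod_def row_def lessThan_atLeast0)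
    also have "\<dots> = (\<Sum>i<n. c $ i * (\<Sum>h\<in>I. a h (\<psi> i) * u h $ k))"
      using ph_u[OF psi_in] k unfolding a_def by (simp add: mult.commute)
    also have "\<dots> = (\<Sum>h\<in>I. d h * u h $ k)"
      unfolding d_def sum_distrib_left sum_distrib_right by (subst sum.swap) (simp add: ac_simps)
    finally show ?thesis .
  qed
  then show ?thesis using v by (intro exI[of _ d] eq_vecI) auto
qed

lemma expansion: assumes v: "v \<in> carrier_vec m"
  shows "v = vec m (\<lambda>k. \<Sum>h\<in>I. ip (u h) v * u h $ k)"
proof -
  obtain d where d: "v = vec m (\<lambda>k. \<Sum>h\<in>I. d h * u h $ k)" using span_u[OF v] by blast
  have "ip (u h) v = d h" if h: "h \<in> I" for h
  proof -
    have "ip (u h) v = (\<Sum>h'\<in>I. d h' * ip (u h) (u h'))"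
      by (subst d) (rule ip_vsum[OF u_carrier])
    also have "\<dots> = (\<Sum>h'\<in>I. if h' = h then d h' else 0)"
      by (rule sum.cong[OF refl]) (use u_orth h in auto)
    also have "\<dots> = d h" using h finI by simp
    finally show ?thesis .
  qed
  then show ?thesis by (subst (1) d) (auto intro!: eq_vecI sum.cong)
qed

lemma mat_eq_u:
  assumes A: "A \<in> carrier_mat m m" and B: "B \<in> carrier_mat m m"
    and e: "\<And>h. h \<in> I \<Longrightarrow> A *\<^sub>v u h = B *\<^sub>v u h"
  shows "A = B"
proof (rule mat_eq_by_vec[OF A B])
  fix v :: "complex vec" assume v: "v \<in> carrier_vec m"
  have "A *\<^sub>v v = vec m (\<lambda>k. \<Sum>h\<in>I. ip (u h) v * (A *\<^sub>v u h) $ k)"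
    by (subst expansion[OF v]) (rule mult_vsum[OF A u_carrier])
  also have "\<dots> = vec m (\<lambda>k. \<Sum>h\<in>I. ip (u h) v * (B *\<^sub>v u h) $ k)"
    using e by simp
  also have "\<dots> = B *\<^sub>v v"
    by (subst (2) expansion[OF v]) (rule mult_vsum[OF B u_carrier, symmetric])
  finally show "A *\<^sub>v v = B *\<^sub>v v" .
qed

lemma I_nonempty: "I \<noteq> {}"
proof
  assume "I = {}"
  have "unit_vec m 0 $ 0 = (vec m (\<lambda>k. \<Sum>h\<in>I. ip (u h) (unit_vec m 0) * u h $ k)) $ 0"
    using arg_cong[OF expansion[OF unit_vec_carrier[of m 0]], of "\<lambda>x. x $ 0"] .
  then have "unit_vec m 0 $ 0 = (0::complex)" using m_pos \<open>I = {}\<close> by simp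
  then show False using m_pos by simp
qed

end

context gu begin

abbreviation "S \<equiv> frame_op m n U \<phi>"

lemma S_carrier: "S \<in> carrier_mat m m" unfolding frame_op_def by simp

lemma S_mult: assumes x: "x \<in> carrier_vec m"
  shows "S *\<^sub>v x = vec m (\<lambda>r. \<Sum>q\<in>Q. ip (ph q) x * ph q $ r)"
proof (rule eq_vecI)
  fix r assume "r < dim_vec (vec m (\<lambda>r. \<Sum>q\<in>Q. ip (ph q) x * ph q $ r))"
  then have r: "r < m" by simp
  have "(S *\<^sub>v x) $ r = (\<Sum>c<m. (\<Sum>i<n. fvec U \<phi> i $ r * cnj (fvec U \<phi> i $ c)) * x $ c)"
    using r x unfolding frame_op_def by (simp add: scalar_prod_def row_def lessThan_atLeast0)
  also have "\<dots> = (\<Sum>i<n. ip (fvec U \<phi> i) x * fvec U \<phi> i $ r)"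
    unfolding ip_def sum_distrib_left sum_distrib_right
    by (subst sum.swap) (simp add: ac_simps fvec_eq ph_carrier[OF psi_in, THEN carrier_vecD])
  also have "\<dots> = (\<Sum>i<n. ip (ph (\<psi> i)) x * ph (\<psi> i) $ r)"
    by (rule sum.cong[OF refl]) (simp add: fvec_eq)
  also have "\<dots> = (\<Sum>q\<in>Q. ip (ph q) x * ph q $ r)"
    by (rule sum.reindex_bij_betw[OF iso_bij, of "\<lambda>q. ip (ph q) x * ph q $ r"])
  finally show "(S *\<^sub>v x) $ r = vec m (\<lambda>r. \<Sum>q\<in>Q. ip (ph q) x * ph q $ r) $ r" using r by simp
qed (use S_carrier in simp)

lemma S_phat: "S *\<^sub>v phat h = (sn * sh h) \<cdot>\<^sub>v phat h"
proof -
  have "S *\<^sub>v phat h = vec m (\<lambda>r. \<Sum>q\<in>Q. (chi ns h q * sh h) * ph q $ r)"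
    unfolding S_mult[OF phat_carrier] using ip_ph_phat by simp
  also have "\<dots> = (sn * sh h) \<cdot>\<^sub>v phat h"
    by (subst phat_eq) (rule eq_vecI, use sn_nz in \<open>auto simp: sum_distrib_left intro!: sum.cong\<close>)
  finally show ?thesis .
qed

lemma S_u: assumes h: "h \<in> I" shows "S *\<^sub>v u h = complex_of_real ((sg h)^2) \<cdot>\<^sub>v u h"
proof -
  have "S *\<^sub>v u h = complex_of_real (1 / sg h) \<cdot>\<^sub>v (S *\<^sub>v phat h)"
    unfolding uvec_def using mult_mat_vec[OF S_carrier phat_carrier] by simp
  also have "\<dots> = complex_of_real ((sg h)^2) \<cdot>\<^sub>v u h"
    unfolding S_phat sg_sq_c[symmetric] uvec_def by (simp add: smult_smult_assoc mult.commute)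
  finally show ?thesis .
qed

lemma V_u: assumes q: "q \<in> Q" shows "V q *\<^sub>v u h = cnj (chi ns h q) \<cdot>\<^sub>v u h"
  unfolding uvec_def using mult_mat_vec[OF V_carrier[OF q] phat_carrier] eig[OF q]
  by (simp add: smult_smult_assoc mult.commute)

definition Msum :: "((nat \<Rightarrow> nat) \<Rightarrow> complex) \<Rightarrow> complex mat" where
  "Msum d = mat m m (\<lambda>(r,k). \<Sum>h\<in>I. d h * u h $ r * cnj (u h $ k))"

lemma Msum_carrier: "Msum d \<in> carrier_mat m m" unfolding Msum_def by simp

lemma Msum_mult: assumes x: "x \<in> carrier_vec m"
  shows "Msum d *\<^sub>v x = vec m (\<lambda>r. \<Sum>h\<in>I. (d h * ip (u h) x) * u h $ r)"
proof (rule eq_vecI)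
  fix r assume "r < dim_vec (vec m (\<lambda>r. \<Sum>h\<in>I. (d h * ip (u h) x) * u h $ r))"
  then have r: "r < m" by simp
  have "(Msum d *\<^sub>v x) $ r = (\<Sum>k<m. (\<Sum>h\<in>I. d h * u h $ r * cnj (u h $ k)) * x $ k)"
    using r x unfolding Msum_def by (simp add: scalar_prod_def row_def lessThan_atLeast0)
  also have "\<dots> = (\<Sum>h\<in>I. (d h * ip (u h) x) * u h $ r)"
    unfolding ip_def sum_distrib_left sum_distrib_right
    by (subst sum.swap) (simp add: ac_simps u_carrier[THEN carrier_vecD])
  finally show "(Msum d *\<^sub>v x) $ r = vec m (\<lambda>r. \<Sum>h\<in>I. (d h * ip (u h) x) * u h $ r) $ r" using r by simp
qed (simp add: Msum_def)

lemma Msum_u: assumes h: "h \<in> I" shows "Msum d *\<^sub>v u h = d h \<cdot>\<^sub>v u h"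
proof -
  have "Msum d *\<^sub>v u h = vec m (\<lambda>r. \<Sum>h'\<in>I. (d h' * ip (u h') (u h)) * u h' $ r)"
    by (rule Msum_mult[OF u_carrier])
  also have "\<dots> = vec m (\<lambda>r. \<Sum>h'\<in>I. if h' = h then d h * u h $ r else 0)"
    by (rule eq_vecI) (auto simp: u_orth[OF _ h] intro!: sum.cong)
  also have "\<dots> = d h \<cdot>\<^sub>v u h" using h finI u_carrier[of h] by (auto intro!: eq_vecI)
  finally show ?thesis .
qed

lemma assoc3: assumes "A \<in> carrier_mat m m" "B \<in> carrier_mat m m" "C \<in> carrier_mat m m" "v \<in> carrier_vec m"
  shows "A * B * C *\<^sub>v v = A *\<^sub>v (B *\<^sub>v (C *\<^sub>v v))"
proof -
  have "A * B * C *\<^sub>v v = (A * B) *\<^sub>v (C *\<^sub>v v)"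
    using assoc_mult_mat_vec[OF mult_carrier_mat[OF assms(1,2)] assms(3,4)] .
  also have "\<dots> = A *\<^sub>v (B *\<^sub>v (C *\<^sub>v v))"
    using assoc_mult_mat_vec[OF assms(1,2) mult_mat_vec_carrier[OF assms(3,4)]] .
  finally show ?thesis .
qed

lemma Sinv_exists: "\<exists>Sinv \<in> carrier_mat m m. Sinv * S = 1\<^sub>m m \<and> S * Sinv = 1\<^sub>m m"
proof -
  let ?T = "Msum (\<lambda>h. 1 / complex_of_real ((sg h)^2))"
  have "?T * S = 1\<^sub>m m"
  proof (rule mat_eq_u)
    fix h assume h: "h \<in> I"
    have nz: "complex_of_real ((sg h)^2) \<noteq> 0" using sg_pos[OF h] by simp
    have "?T * S *\<^sub>v u h = ?T *\<^sub>v (S *\<^sub>v u h)"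
      using assoc_mult_mat_vec[OF Msum_carrier S_carrier u_carrier] .
    also have "\<dots> = u h" unfolding S_u[OF h] mult_mat_vec[OF Msum_carrier u_carrier] Msum_u[OF h]
      using nz by (simp add: smult_smult_assoc)
    finally show "?T * S *\<^sub>v u h = 1\<^sub>m m *\<^sub>v u h" using u_carrier by simp
  qed (use Msum_carrier S_carrier in \<open>auto intro!: mult_carrier_mat\<close>)
  moreover then have "S * ?T = 1\<^sub>m m"
    using mat_mult_left_right_inverse[OF Msum_carrier S_carrier] by blast
  ultimately show ?thesis using Msum_carrier by blast
qed

lemma Sinv_u: assumes T: "T \<in> carrier_mat m m" "T * S = 1\<^sub>m m" and h: "h \<in> I"
  shows "T *\<^sub>v u h = (1 / complex_of_real ((sg h)^2)) \<cdot>\<^sub>v u h"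
proof -
  have nz: "complex_of_real ((sg h)^2) \<noteq> 0" using sg_pos[OF h] by simp
  have "u h = T * S *\<^sub>v u h" using T u_carrier by simp
  also have "\<dots> = complex_of_real ((sg h)^2) \<cdot>\<^sub>v (T *\<^sub>v u h)"
    unfolding assoc_mult_mat_vec[OF T(1) S_carrier u_carrier] S_u[OF h] mult_mat_vec[OF T(1) u_carrier] ..
  finally have "(1 / complex_of_real ((sg h)^2)) \<cdot>\<^sub>v u h = (1 / complex_of_real ((sg h)^2)) \<cdot>\<^sub>v (complex_of_real ((sg h)^2) \<cdot>\<^sub>v (T *\<^sub>v u h))"
    by simp
  then show ?thesis using nz by (simp add: smult_smult_assoc)
qed

lemma commute_V:
  assumes A: "A \<in> carrier_mat m m" and d: "\<And>h. h \<in> I \<Longrightarrow> A *\<^sub>v u h = d h \<cdot>\<^sub>v u h" and q: "q \<in> Q"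
  shows "A * V q = V q * A"
proof (rule mat_eq_u)
  fix h assume h: "h \<in> I"
  have "A * V q *\<^sub>v u h = A *\<^sub>v (V q *\<^sub>v u h)" using assoc_mult_mat_vec[OF A V_carrier[OF q] u_carrier] .
  also have "\<dots> = (cnj (chi ns h q) * d h) \<cdot>\<^sub>v u h"
    unfolding V_u[OF q] mult_mat_vec[OF A u_carrier] d[OF h] by (simp add: smult_smult_assoc)
  also have "\<dots> = V q *\<^sub>v (A *\<^sub>v u h)"
    unfolding d[OF h] mult_mat_vec[OF V_carrier[OF q] u_carrier] V_u[OF q] by (simp add: smult_smult_assoc mult.commute)
  also have "\<dots> = V q * A *\<^sub>v u h" using assoc_mult_mat_vec[OF V_carrier[OF q] A u_carrier] by simp
  finally show "A * V q *\<^sub>v u h = V q * A *\<^sub>v u h" .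
qed (use A V_carrier[OF q] in auto)

lemma commute_fvec:
  assumes A: "A \<in> carrier_mat m m" and d: "\<And>h. h \<in> I \<Longrightarrow> A *\<^sub>v u h = d h \<cdot>\<^sub>v u h" and i: "i < n"
  shows "A *\<^sub>v fvec U \<phi> i = U i *\<^sub>v (A *\<^sub>v \<phi>)"
proof -
  have q: "\<psi> i \<in> Q" using psi_in[OF i] .
  have "A *\<^sub>v fvec U \<phi> i = A *\<^sub>v (V (\<psi> i) *\<^sub>v \<phi>)" unfolding fvec_def U_eq[OF i] ..
  also have "\<dots> = (A * V (\<psi> i)) *\<^sub>v \<phi>" using assoc_mult_mat_vec[OF A V_carrier[OF q] phi_dim] by simp
  also have "\<dots> = (V (\<psi> i) * A) *\<^sub>v \<phi>" using commute_V[OF A d q] by simp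
  also have "\<dots> = U i *\<^sub>v (A *\<^sub>v \<phi>)" using assoc_mult_mat_vec[OF V_carrier[OF q] A phi_dim] U_eq[OF i] by simp
  finally show ?thesis .
qed

lemma phi_u: "\<phi> = vec m (\<lambda>k. \<Sum>h\<in>I. (complex_of_real (sg h) / sn) * u h $ k)"
  using ph_u[OF qzero_in[OF ns_pos]] unfolding ph_zero chi_zero by simp

lemma A_phi:
  assumes A: "A \<in> carrier_mat m m" and d: "\<And>h. h \<in> I \<Longrightarrow> A *\<^sub>v u h = d h \<cdot>\<^sub>v u h"
  shows "A *\<^sub>v \<phi> = vec m (\<lambda>k. \<Sum>h\<in>I. (complex_of_real (sg h) / sn * d h) * u h $ k)"
proof -
  have "A *\<^sub>v \<phi> = vec m (\<lambda>k. \<Sum>h\<in>I. (complex_of_real (sg h) / sn) * (A *\<^sub>v u h) $ k)"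
    by (subst phi_u) (rule mult_vsum[OF A u_carrier])
  also have "\<dots> = vec m (\<lambda>k. \<Sum>h\<in>I. (complex_of_real (sg h) / sn * d h) * u h $ k)"
    by (rule eq_vecI) (auto simp: d u_carrier[THEN carrier_vecD] intro!: sum.cong)
  finally show ?thesis .
qed

end

context gu begin

lemma posdef_carrier: "posdef_m m R \<Longrightarrow> R \<in> carrier_mat m m"
  unfolding posdef_m_def hermitian_m_def by blast

lemma R_u: assumes R: "posdef_m m R" "R * R * S = 1\<^sub>m m" and h: "h \<in> I"
  shows "R *\<^sub>v u h = complex_of_real (1 / sg h) \<cdot>\<^sub>v u h"
proof -
  have Rc: "R \<in> carrier_mat m m" using posdef_carrier[OF R(1)] .
  let ?c = "complex_of_real (1 / sg h)" and ?s = "complex_of_real ((sg h)^2)"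
  have sg0: "sg h \<noteq> 0" using sg_pos[OF h] by simp
  have c2: "?c * ?c * ?s = 1" using sg0 by (simp add: power2_eq_square)
  have Ru: "R *\<^sub>v u h \<in> carrier_vec m" using mult_mat_vec_carrier[OF Rc u_carrier] .
  have "u h = R * R * S *\<^sub>v u h" using R(2) u_carrier by simp
  also have "\<dots> = R *\<^sub>v (R *\<^sub>v (S *\<^sub>v u h))" by (rule assoc3[OF Rc Rc S_carrier u_carrier])
  also have "\<dots> = ?s \<cdot>\<^sub>v (R *\<^sub>v (R *\<^sub>v u h))"
    unfolding S_u[OF h] mult_mat_vec[OF Rc u_carrier] mult_mat_vec[OF Rc Ru] ..
  finally have "(?c * ?c) \<cdot>\<^sub>v u h = (?c * ?c) \<cdot>\<^sub>v (?s \<cdot>\<^sub>v (R *\<^sub>v (R *\<^sub>v u h)))" by simp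
  then have RR: "R *\<^sub>v (R *\<^sub>v u h) = (?c * ?c) \<cdot>\<^sub>v u h" unfolding smult_smult_assoc c2 by simp
  define w where "w = R *\<^sub>v u h - ?c \<cdot>\<^sub>v u h"
  have wc: "w \<in> carrier_vec m" unfolding w_def using Ru u_carrier by simp
  have "R *\<^sub>v w = R *\<^sub>v (R *\<^sub>v u h) - R *\<^sub>v (?c \<cdot>\<^sub>v u h)"
    unfolding w_def by (rule mult_minus_distrib_mat_vec[OF Rc Ru]) (use u_carrier in simp)
  also have "\<dots> = (- ?c) \<cdot>\<^sub>v w"
    unfolding RR mult_mat_vec[OF Rc u_carrier] w_def
    using carrier_vecD[OF Ru] carrier_vecD[OF u_carrier[of h]] by (intro eq_vecI) (simp_all add: algebra_simps)
  finally have Rw: "R *\<^sub>v w = (- ?c) \<cdot>\<^sub>v w" .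
  have "w = 0\<^sub>v m"
  proof (rule ccontr)
    assume "w \<noteq> 0\<^sub>v m"
    then have pos: "0 < Re (ip w (R *\<^sub>v w))" using R(1) wc unfolding posdef_m_def by blast
    have "ip w (R *\<^sub>v w) = complex_of_real (- (1 / sg h)) * ip w w"
      unfolding Rw ip_smult_right[OF wc wc] by simp
    then have "Re (ip w (R *\<^sub>v w)) = - (1 / sg h) * Re (ip w w)" by simp
    moreover have "0 \<le> (1 / sg h) * Re (ip w w)" using sg_pos[OF h] ip_self_nonneg by simp
    ultimately show False using pos by linarith
  qed
  show ?thesis
  proof (rule eq_vecI)
    fix i assume "i < dim_vec (?c \<cdot>\<^sub>v u h)"
    then have i: "i < m" using u_carrier[of h] by simp
    have "w $ i = 0" using \<open>w = 0\<^sub>v m\<close> i by simp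
    then show "(R *\<^sub>v u h) $ i = (?c \<cdot>\<^sub>v u h) $ i"
      unfolding w_def using i carrier_vecD[OF Ru] carrier_vecD[OF u_carrier[of h]] by simp
  qed (use carrier_vecD[OF Ru] carrier_vecD[OF u_carrier[of h]] in simp)
qed

definition "R0 = Msum (\<lambda>h. complex_of_real (1 / sg h))"

lemma R0_posdef: "posdef_m m R0"
  unfolding posdef_m_def hermitian_m_def
proof (intro conjI ballI impI)
  show R0c: "R0 \<in> carrier_mat m m" unfolding R0_def by (rule Msum_carrier)
  show "adj R0 = R0"
    by (rule eq_matI) (auto simp: adj_def R0_def Msum_def ac_simps)
  fix x :: "complex vec" assume x: "x \<in> carrier_vec m" "x \<noteq> 0\<^sub>v m"
  have "ip x (R0 *\<^sub>v x) = (\<Sum>h\<in>I. (complex_of_real (1 / sg h) * ip (u h) x) * ip x (u h))"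
    unfolding R0_def Msum_mult[OF x(1)] by (rule ip_vsum[OF x(1)])
  also have "\<dots> = (\<Sum>h\<in>I. complex_of_real (1 / sg h * (cmod (ip (u h) x))^2))"
  proof (rule sum.cong[OF refl])
    fix h assume "h \<in> I"
    have "ip x (u h) = cnj (ip (u h) x)" using ip_conj[OF u_carrier x(1)] .
    then show "(complex_of_real (1 / sg h) * ip (u h) x) * ip x (u h) = complex_of_real (1 / sg h * (cmod (ip (u h) x))^2)"
      using cnj_mult_self[of "ip (u h) x"] by (simp add: ac_simps)
  qed
  finally have e: "Re (ip x (R0 *\<^sub>v x)) = (\<Sum>h\<in>I. 1 / sg h * (cmod (ip (u h) x))^2)" by simp
  obtain h where h: "h \<in> I" "ip (u h) x \<noteq> 0"
  proof (rule ccontr)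
    assume "\<not> thesis"
    then have "\<forall>h\<in>I. ip (u h) x = 0" using that by blast
    then have "x = vec m (\<lambda>k. 0)" using expansion[OF x(1)] by simp
    then show False using x(2) by (simp add: zero_vec_def)
  qed
  have "0 < (\<Sum>h\<in>I. 1 / sg h * (cmod (ip (u h) x))^2)"
  proof (rule sum_pos2[OF finI h(1)])
    show "0 < 1 / sg h * (cmod (ip (u h) x))^2" using sg_pos[OF h(1)] h(2) by simp
    show "0 \<le> 1 / sg i * (cmod (ip (u i) x))^2" if "i \<in> I" for i using sg_pos[OF that] by simp
  qed
  then show "0 < Re (ip x (R0 *\<^sub>v x))" using e by simp
qed

lemma R0_inv: "R0 * R0 * S = 1\<^sub>m m"
proof (rule mat_eq_u)
  fix h assume h: "h \<in> I"
  have R0c: "R0 \<in> carrier_mat m m" unfolding R0_def by (rule Msum_carrier)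
  have sg0: "sg h \<noteq> 0" using sg_pos[OF h] by simp
  have "R0 * R0 * S *\<^sub>v u h = R0 *\<^sub>v (R0 *\<^sub>v (S *\<^sub>v u h))" by (rule assoc3[OF R0c R0c S_carrier u_carrier])
  also have "\<dots> = u h"
  proof -
    let ?c = "complex_of_real (1 / sg h)" and ?s = "complex_of_real ((sg h)^2)"
    have a: "R0 *\<^sub>v u h = ?c \<cdot>\<^sub>v u h" unfolding R0_def by (rule Msum_u[OF h])
    have b: "R0 *\<^sub>v (S *\<^sub>v u h) = (?s * ?c) \<cdot>\<^sub>v u h"
      unfolding S_u[OF h] mult_mat_vec[OF R0c u_carrier] a smult_smult_assoc ..
    have "R0 *\<^sub>v (R0 *\<^sub>v (S *\<^sub>v u h)) = (?s * ?c) \<cdot>\<^sub>v (R0 *\<^sub>v u h)"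
      unfolding b mult_mat_vec[OF R0c u_carrier] ..
    also have "\<dots> = (?s * ?c * ?c) \<cdot>\<^sub>v u h" unfolding a smult_smult_assoc ..
    also have "?s * ?c * ?c = 1" using sg0 by (simp add: power2_eq_square)
    finally show ?thesis by simp
  qed
  finally show "R0 * R0 * S *\<^sub>v u h = 1\<^sub>m m *\<^sub>v u h" using u_carrier by simp
qed (use R0_posdef[THEN posdef_carrier] S_carrier in \<open>auto intro!: mult_carrier_mat\<close>)

lemma S_herm: "adj S = S"
  by (rule eq_matI) (auto simp: adj_def frame_op_def ac_simps)

lemma u_nz: "h \<in> I \<Longrightarrow> u h \<noteq> 0\<^sub>v m"
  using u_orth[of h h] by (auto simp: ip_def)

lemma eig_char: "eigenvalue S e \<longleftrightarrow> (\<exists>h\<in>I. e = complex_of_real ((sg h)^2))"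
proof
  assume "eigenvalue S e"
  then obtain v where v: "v \<in> carrier_vec m" "v \<noteq> 0\<^sub>v m" "S *\<^sub>v v = e \<cdot>\<^sub>v v"
    unfolding eigenvalue_def eigenvector_def using S_carrier by auto
  obtain h where h: "h \<in> I" "ip (u h) v \<noteq> 0"
  proof (rule ccontr)
    assume "\<not> thesis"
    then have "\<forall>h\<in>I. ip (u h) v = 0" using that by blast
    then have "v = vec m (\<lambda>k. 0)" using expansion[OF v(1)] by simp
    then show False using v(2) by (simp add: zero_vec_def)
  qed
  have "e * ip (u h) v = ip (u h) (S *\<^sub>v v)" unfolding v(3) ip_smult_right[OF v(1) u_carrier] ..
  also have "\<dots> = ip (adj S *\<^sub>v u h) v" by (rule ip_adj[OF S_carrier u_carrier v(1)])
  also have "\<dots> = complex_of_real ((sg h)^2) * ip (u h) v" unfolding S_herm S_u[OF h(1)] ip_smult_left by simp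
  finally show "\<exists>h\<in>I. e = complex_of_real ((sg h)^2)" using h by auto
next
  assume "\<exists>h\<in>I. e = complex_of_real ((sg h)^2)"
  then obtain h where h: "h \<in> I" "e = complex_of_real ((sg h)^2)" by blast
  have "eigenvector S (u h) e"
    unfolding eigenvector_def using S_carrier u_carrier u_nz[OF h(1)] S_u[OF h(1)] h(2) by auto
  then show "eigenvalue S e" unfolding eigenvalue_def by blast
qed

lemma eig_set: "Re ` {e. eigenvalue S e} = (\<lambda>x. sqrt (real n) * x) ` ((\<lambda>h. Re (sh h)) ` I)"
proof -
  have "{e. eigenvalue S e} = (\<lambda>h. complex_of_real ((sg h)^2)) ` I" unfolding eig_char image_def by simp
  then have "Re ` {e. eigenvalue S e} = (\<lambda>h. (sg h)^2) ` I" by (simp add: image_image)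
  then show ?thesis unfolding sg_sq by (simp add: image_image)
qed

lemma lam_min_eq: "lam_min S = sqrt (real n) * Min ((\<lambda>h. Re (sh h)) ` I)"
proof -
  have "mono (\<lambda>x. sqrt (real n) * x)" by (intro monoI mult_left_mono) auto
  moreover have "finite ((\<lambda>h. Re (sh h)) ` I)" using finI by simp
  moreover have "(\<lambda>h. Re (sh h)) ` I \<noteq> {}" using I_nonempty by simp
  ultimately show ?thesis unfolding lam_min_def eig_set by (simp add: mono_Min_commute)
qed

lemma lam_max_eq: "lam_max S = sqrt (real n) * Max ((\<lambda>h. Re (sh h)) ` I)"
proof -
  have "mono (\<lambda>x. sqrt (real n) * x)" by (intro monoI mult_left_mono) auto
  moreover have "finite ((\<lambda>h. Re (sh h)) ` I)" using finI by simp
  moreover have "(\<lambda>h. Re (sh h)) ` I \<noteq> {}" using I_nonempty by simp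
  ultimately show ?thesis unfolding lam_max_def eig_set by (simp add: mono_Max_commute)
qed

lemma sg_nz: "h \<in> I \<Longrightarrow> sg h \<noteq> 0"
  using sg_pos by force

lemma part_Sinv:
  assumes T: "T \<in> carrier_mat m m" "T * S = 1\<^sub>m m"
  shows "(\<forall>i < n. T *\<^sub>v fvec U \<phi> i = U i *\<^sub>v (T *\<^sub>v \<phi>))
          \<and> T *\<^sub>v \<phi> = vec m (\<lambda>r. (1 / complex_of_real (sqrt (real n))) *
               (\<Sum>h \<in> I. (1 / complex_of_real (sg h)) * u h $ r))"
proof
  show "\<forall>i < n. T *\<^sub>v fvec U \<phi> i = U i *\<^sub>v (T *\<^sub>v \<phi>)"
    using commute_fvec[OF T(1) Sinv_u[OF T]] by blast
  have "T *\<^sub>v \<phi> = vec m (\<lambda>k. \<Sum>h\<in>I. (complex_of_real (sg h) / sn * (1 / complex_of_real ((sg h)^2))) * u h $ k)"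
    by (rule A_phi[OF T(1) Sinv_u[OF T]])
  also have "\<dots> = vec m (\<lambda>r. (1 / complex_of_real (sqrt (real n))) *
               (\<Sum>h \<in> I. (1 / complex_of_real (sg h)) * u h $ r))"
  proof -
    have "(\<Sum>h\<in>I. (complex_of_real (sg h) / sn * (1 / complex_of_real ((sg h)^2))) * u h $ k)
        = (1 / sn) * (\<Sum>h\<in>I. (1 / complex_of_real (sg h)) * u h $ k)" for k
      unfolding sum_distrib_left by (rule sum.cong[OF refl]) (simp add: sg_nz power2_eq_square)
    then show ?thesis by (intro eq_vecI) auto
  qed
  finally show "T *\<^sub>v \<phi> = vec m (\<lambda>r. (1 / complex_of_real (sqrt (real n))) *
               (\<Sum>h \<in> I. (1 / complex_of_real (sg h)) * u h $ r))" .
qed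

lemma part_R:
  assumes R: "posdef_m m R" "R * R * S = 1\<^sub>m m"
  shows "(\<forall>i < n. R *\<^sub>v fvec U \<phi> i = U i *\<^sub>v (R *\<^sub>v \<phi>))
          \<and> R *\<^sub>v \<phi> = vec m (\<lambda>r. (1 / complex_of_real (sqrt (real n))) *
               (\<Sum>h \<in> I. u h $ r))"
proof
  have Rc: "R \<in> carrier_mat m m" using posdef_carrier[OF R(1)] .
  show "\<forall>i < n. R *\<^sub>v fvec U \<phi> i = U i *\<^sub>v (R *\<^sub>v \<phi>)"
    using commute_fvec[OF Rc R_u[OF R]] by blast
  have "R *\<^sub>v \<phi> = vec m (\<lambda>k. \<Sum>h\<in>I. (complex_of_real (sg h) / sn * complex_of_real (1 / sg h)) * u h $ k)"
    by (rule A_phi[OF Rc R_u[OF R]])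
  also have "\<dots> = vec m (\<lambda>r. (1 / complex_of_real (sqrt (real n))) * (\<Sum>h \<in> I. u h $ r))"
  proof -
    have "(\<Sum>h\<in>I. (complex_of_real (sg h) / sn * complex_of_real (1 / sg h)) * u h $ k)
        = (1 / sn) * (\<Sum>h\<in>I. u h $ k)" for k
      unfolding sum_distrib_left by (rule sum.cong[OF refl]) (simp add: sg_nz)
    then show ?thesis by (intro eq_vecI) auto
  qed
  finally show "R *\<^sub>v \<phi> = vec m (\<lambda>r. (1 / complex_of_real (sqrt (real n))) * (\<Sum>h \<in> I. u h $ r))" .
qed

end

context gu begin

abbreviation "Phi \<equiv> Phi_mat m n U \<phi>"
definition "Fm = mat n n (\<lambda>(j,k). chi ns (\<psi> k) (\<psi> j) / sn)"
definition "Dm = mat n n (\<lambda>(j,k). if j = k then complex_of_real ((sg (\<psi> k))^2) else 0)"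

lemma Phi_carrier: "Phi \<in> carrier_mat m n" unfolding Phi_mat_def by simp
lemma G_carrier: "adj Phi * Phi \<in> carrier_mat n n"
  using adj_carrier[OF Phi_carrier] Phi_carrier by (auto intro!: mult_carrier_mat)
lemma Fm_carrier: "Fm \<in> carrier_mat n n" unfolding Fm_def by simp
lemma Dm_carrier: "Dm \<in> carrier_mat n n" unfolding Dm_def by simp

lemma G_entry: assumes "i < n" "j < n"
  shows "(adj Phi * Phi) $$ (i,j) = ip (ph (\<psi> i)) (ph (\<psi> j))"
  using assms ph_carrier[OF psi_in[OF assms(1)], THEN carrier_vecD]
  by (simp add: adj_def Phi_mat_def scalar_prod_def row_def col_def ip_def fvec_eq lessThan_atLeast0)

lemma mult_entry: assumes "A \<in> carrier_mat k l" "B \<in> carrier_mat l p" "i < k" "j < p"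
  shows "(A * B) $$ (i,j) = (\<Sum>r<l. A $$ (i,r) * B $$ (r,j))"
  using assms by (simp add: scalar_prod_def row_def col_def lessThan_atLeast0)

lemma sum_psi: "(\<Sum>j<n. f (\<psi> j)) = (\<Sum>q\<in>Q. f q)"
  by (rule sum.reindex_bij_betw[OF iso_bij])

lemma GF: "adj Phi * Phi * Fm = Fm * Dm"
proof (rule eq_matI)
  fix i k assume ik: "i < dim_row (Fm * Dm)" "k < dim_col (Fm * Dm)"
  then have i: "i < n" and k: "k < n" using Fm_carrier Dm_carrier by auto
  have "(adj Phi * Phi * Fm) $$ (i,k) = (\<Sum>j<n. (chi ns (\<psi> k) (\<psi> j) / sn) * ip (ph (\<psi> i)) (ph (\<psi> j)))"
    unfolding mult_entry[OF G_carrier Fm_carrier i k]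
    by (rule sum.cong[OF refl]) (use i k in \<open>simp add: G_entry Fm_def\<close>)
  also have "\<dots> = (\<Sum>q\<in>Q. (chi ns (\<psi> k) q / sn) * ip (ph (\<psi> i)) (ph q))"
    by (rule sum_psi)
  also have "\<dots> = ip (ph (\<psi> i)) (phat (\<psi> k))"
    unfolding phat_eq by (rule ip_vsum[OF ph_carrier[OF psi_in[OF i]], symmetric])
  also have "\<dots> = chi ns (\<psi> k) (\<psi> i) * sh (\<psi> k)" by (rule ip_ph_phat[OF psi_in[OF i]])
  also have "\<dots> = (Fm * Dm) $$ (i,k)"
  proof -
    have "(Fm * Dm) $$ (i,k) = (\<Sum>j<n. Fm $$ (i,j) * (if j = k then complex_of_real ((sg (\<psi> k))^2) else 0))"
      unfolding mult_entry[OF Fm_carrier Dm_carrier i k]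
      by (rule sum.cong[OF refl]) (use i k in \<open>simp add: Dm_def\<close>)
    also have "\<dots> = Fm $$ (i,k) * complex_of_real ((sg (\<psi> k))^2)"
      using k by (simp add: if_distrib[where f="\<lambda>x. _ * x"] cong: if_cong)
    also have "\<dots> = chi ns (\<psi> k) (\<psi> i) * sh (\<psi> k)"
      unfolding sg_sq_c Fm_def using i k sn_nz by simp
    finally show ?thesis ..
  qed
  finally show "(adj Phi * Phi * Fm) $$ (i,k) = (Fm * Dm) $$ (i,k)" .
qed (use G_carrier Fm_carrier Dm_carrier in auto)

lemma FF: "adj Fm * Fm = 1\<^sub>m n"
proof (rule eq_matI)
  fix i k assume ik: "i < dim_row (1\<^sub>m n)" "k < dim_col (1\<^sub>m n)"
  then have i: "i < n" and k: "k < n" by auto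
  have "(adj Fm * Fm) $$ (i,k) = (\<Sum>j<n. chi ns (\<psi> k) (\<psi> j) * cnj (chi ns (\<psi> i) (\<psi> j)) / (sn * sn))"
    unfolding mult_entry[OF adj_carrier[OF Fm_carrier] Fm_carrier i k]
    by (rule sum.cong[OF refl]) (use i k in \<open>simp add: Fm_def adj_def\<close>)
  also have "\<dots> = (\<Sum>q\<in>Q. chi ns (\<psi> k) q * cnj (chi ns (\<psi> i) q) / (sn * sn))"
    by (rule sum_psi)
  also have "\<dots> = (\<Sum>q\<in>Q. chi ns (\<psi> k) q * cnj (chi ns (\<psi> i) q)) / (sn * sn)"
    by (simp add: sum_divide_distrib)
  also have "\<dots> = (if \<psi> k = \<psi> i then 1 else 0)"
    unfolding chi_orth[OF ns_pos finQ psi_in[OF k] psi_in[OF i]] sn_sq cardQ using n_pos by simp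
  also have "\<dots> = 1\<^sub>m n $$ (i,k)"
  proof -
    have "\<psi> k = \<psi> i \<longleftrightarrow> k = i" using iso_bij i k unfolding bij_betw_def inj_on_def by auto
    then show ?thesis using i k by auto
  qed
  finally show "(adj Fm * Fm) $$ (i,k) = 1\<^sub>m n $$ (i,k)" .
qed (use adj_carrier[OF Fm_carrier] Fm_carrier in auto)

lemma char_G: "char_poly (adj Phi * Phi) = char_poly Dm"
proof (rule char_poly_similar)
  have AF: "adj Fm \<in> carrier_mat n n" using adj_carrier[OF Fm_carrier] .
  have FF': "Fm * adj Fm = 1\<^sub>m n" using mat_mult_left_right_inverse[OF AF Fm_carrier FF] .
  have "adj Phi * Phi = adj Phi * Phi * (Fm * adj Fm)" using right_mult_one_mat[OF G_carrier] FF' by simp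
  also have "\<dots> = (adj Phi * Phi * Fm) * adj Fm" using G_carrier Fm_carrier AF by (simp add: assoc_mult_mat)
  also have "\<dots> = Fm * Dm * adj Fm" unfolding GF ..
  finally have e: "adj Phi * Phi = Fm * Dm * adj Fm" .
  show "similar_mat (adj Phi * Phi) Dm"
    unfolding similar_mat_def
    using similar_mat_witI[OF FF' FF e G_carrier Dm_carrier Fm_carrier AF] by blast
qed

lemma diag_Dm: "diag_mat Dm = map (\<lambda>i. complex_of_real ((sg (\<psi> i))^2)) [0..<n]"
  unfolding diag_mat_def Dm_def by simp

lemma ut_Dm: "upper_triangular Dm"
  unfolding upper_triangular_def Dm_def by auto

lemma singular: "is_singular_values Phi (image_mset sg (mset_set Q))"
  unfolding is_singular_values_def
proof
  show "\<forall>x\<in>#image_mset sg (mset_set Q). 0 \<le> x" using sg_nonneg by auto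
  have "char_poly (adj Phi * Phi) = (\<Prod>a\<leftarrow>diag_mat Dm. [:- a, 1:])"
    unfolding char_G by (rule char_poly_upper_triangular[OF Dm_carrier ut_Dm])
  also have "\<dots> = (\<Prod>i\<in>{0..<n}. [:- complex_of_real ((sg (\<psi> i))^2), 1:])"
    unfolding diag_Dm by (simp add: prod.distinct_set_conv_list[symmetric] o_def)
  also have "\<dots> = (\<Prod>q\<in>Q. [:- complex_of_real ((sg q)^2), 1:])"
    unfolding atLeast0LessThan by (rule prod.reindex_bij_betw[OF iso_bij])
  also have "\<dots> = (\<Prod>x\<in>#image_mset sg (mset_set Q). [:- complex_of_real (x^2), 1:])"
    unfolding prod_unfold_prod_mset by (simp add: image_mset.compositionality o_def)
  finally show "char_poly (adj Phi * Phi) = (\<Prod>x\<in>#image_mset sg (mset_set Q). [:- complex_of_real (x^2), 1:])" .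
qed

end

theorem theorem2:
  fixes m n :: nat and ns :: "nat list"
    and U :: "nat \<Rightarrow> complex mat" and \<phi> :: "complex vec"
    and \<psi> :: "nat \<Rightarrow> (nat \<Rightarrow> nat)"
  assumes m_pos: "0 < m"
    and ns_pos: "\<forall>t < length ns. 0 < ns ! t"
    and phi_dim: "\<phi> \<in> carrier_vec m"
    and unitary: "\<forall>i < n. unitary_m m (U i)"
    and distinct: "inj_on U {..<n}"
    and closed: "\<forall>i < n. \<forall>j < n. \<exists>k < n. U i * U j = U k"
    and abelian: "\<forall>i < n. \<forall>j < n. U i * U j = U j * U i"
    and iso_bij: "bij_betw \<psi> {..<n} (Qset ns)"
    and iso_hom: "\<forall>i < n. \<forall>j < n. \<forall>k < n. U i * U j = U k \<longrightarrow> \<psi> k = qadd ns (\<psi> i) (\<psi> j)"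
    and spanning: "\<forall>v \<in> carrier_vec m. \<exists>c \<in> carrier_vec n. v = Phi_mat m n U \<phi> *\<^sub>v c"
  shows
    "(\<forall>h \<in> Qset ns. Im (shat ns n U \<psi> \<phi> h) = 0 \<and> 0 \<le> Re (shat ns n U \<psi> \<phi> h))
     \<and> is_singular_values (Phi_mat m n U \<phi>) (image_mset (sigma ns n U \<psi> \<phi>) (mset_set (Qset ns)))
     \<and> (\<exists>Sinv \<in> carrier_mat m m. Sinv * frame_op m n U \<phi> = 1\<^sub>m m \<and> frame_op m n U \<phi> * Sinv = 1\<^sub>m m)
     \<and> (\<forall>Sinv \<in> carrier_mat m m. Sinv * frame_op m n U \<phi> = 1\<^sub>m m \<longrightarrow>
          (\<forall>i < n. Sinv *\<^sub>v fvec U \<phi> i = U i *\<^sub>v (Sinv *\<^sub>v \<phi>))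
          \<and> Sinv *\<^sub>v \<phi> = vec m (\<lambda>r. (1 / complex_of_real (sqrt (real n))) *
               (\<Sum>h \<in> Iset ns n U \<psi> \<phi>. (1 / complex_of_real (sigma ns n U \<psi> \<phi> h)) * uvec ns m n U \<psi> \<phi> h $ r)))
     \<and> (\<exists>R. posdef_m m R \<and> R * R * frame_op m n U \<phi> = 1\<^sub>m m)
     \<and> (\<forall>R. posdef_m m R \<and> R * R * frame_op m n U \<phi> = 1\<^sub>m m \<longrightarrow>
          (\<forall>i < n. R *\<^sub>v fvec U \<phi> i = U i *\<^sub>v (R *\<^sub>v \<phi>))
          \<and> R *\<^sub>v \<phi> = vec m (\<lambda>r. (1 / complex_of_real (sqrt (real n))) *
               (\<Sum>h \<in> Iset ns n U \<psi> \<phi>. uvec ns m n U \<psi> \<phi> h $ r)))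
     \<and> lam_min (frame_op m n U \<phi>) = sqrt (real n) * Min ((\<lambda>h. Re (shat ns n U \<psi> \<phi> h)) ` Iset ns n U \<psi> \<phi>)
     \<and> lam_max (frame_op m n U \<phi>) = sqrt (real n) * Max ((\<lambda>h. Re (shat ns n U \<psi> \<phi> h)) ` Iset ns n U \<psi> \<phi>)"
  proof -
  interpret g: gu m n ns U \<phi> \<psi>
    by (rule gu.intro[OF assms])
  show ?thesis
  proof (intro conjI)
    show "\<forall>h \<in> Qset ns. Im (shat ns n U \<psi> \<phi> h) = 0 \<and> 0 \<le> Re (shat ns n U \<psi> \<phi> h)"
    proof
      fix h
      have "Im (shat ns n U \<psi> \<phi> h) = Im (complex_of_real (Re (shat ns n U \<psi> \<phi> h)))"
        using g.sh_real(1)[of h] by simp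
      then show "Im (shat ns n U \<psi> \<phi> h) = 0 \<and> 0 \<le> Re (shat ns n U \<psi> \<phi> h)"
        using g.sh_real(2)[of h] by simp
    qed
    show "is_singular_values (Phi_mat m n U \<phi>) (image_mset (sigma ns n U \<psi> \<phi>) (mset_set (Qset ns)))"
      by (rule g.singular)
    show "\<exists>Sinv \<in> carrier_mat m m. Sinv * frame_op m n U \<phi> = 1\<^sub>m m \<and> frame_op m n U \<phi> * Sinv = 1\<^sub>m m"
      by (rule g.Sinv_exists)
    show "\<forall>Sinv \<in> carrier_mat m m. Sinv * frame_op m n U \<phi> = 1\<^sub>m m \<longrightarrow>
          (\<forall>i < n. Sinv *\<^sub>v fvec U \<phi> i = U i *\<^sub>v (Sinv *\<^sub>v \<phi>))
          \<and> Sinv *\<^sub>v \<phi> = vec m (\<lambda>r. (1 / complex_of_real (sqrt (real n))) *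
               (\<Sum>h \<in> Iset ns n U \<psi> \<phi>. (1 / complex_of_real (sigma ns n U \<psi> \<phi> h)) * uvec ns m n U \<psi> \<phi> h $ r))"
      by (intro ballI impI) (rule g.part_Sinv)
    show "\<exists>R. posdef_m m R \<and> R * R * frame_op m n U \<phi> = 1\<^sub>m m"
      by (intro exI[of _ g.R0] conjI g.R0_posdef g.R0_inv)
    show "\<forall>R. posdef_m m R \<and> R * R * frame_op m n U \<phi> = 1\<^sub>m m \<longrightarrow>
          (\<forall>i < n. R *\<^sub>v fvec U \<phi> i = U i *\<^sub>v (R *\<^sub>v \<phi>))
          \<and> R *\<^sub>v \<phi> = vec m (\<lambda>r. (1 / complex_of_real (sqrt (real n))) *
               (\<Sum>h \<in> Iset ns n U \<psi> \<phi>. uvec ns m n U \<psi> \<phi> h $ r))"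
      by (intro allI impI, elim conjE) (rule g.part_R)
    show "lam_min (frame_op m n U \<phi>) = sqrt (real n) * Min ((\<lambda>h. Re (shat ns n U \<psi> \<phi> h)) ` Iset ns n U \<psi> \<phi>)"
      by (rule g.lam_min_eq)
    show "lam_max (frame_op m n U \<phi>) = sqrt (real n) * Max ((\<lambda>h. Re (shat ns n U \<psi> \<phi> h)) ` Iset ns n U \<psi> \<phi>)"
      by (rule g.lam_max_eq)
  qed
qed

end
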